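(* Let $r\in\mathbb{N}$ and let $G$ be a countable graph with infinitely many connected components. Then $\mathrm{Rd}_r(G)\ge 1/r$.
   Context: $K_{\mathbb{N}}$ is the complete graph on $\mathbb{N}=\{1,2,\dots\}$; a copy of $G$ is a subgraph of $K_\mathbb{N}$ isomorphic to $G$, monochromatic if all its edges have the same color. $\overline{d}(V)=\limsup_{t\to\infty}|V\cap\{1,\dots,t\}|/t$. For an $r$-coloring $\varphi$ of the edges of $K_\mathbb{N}$, $\mathrm{Rd}_\varphi(G)$ is the supremum of upper densities of monochromatic copies of $G$; $\mathrm{Rd}_r(G)=\inf_\varphi \mathrm{Rd}_\varphi(G)$ over all $r$-colorings. *)

theory Defs
  imports "HOL-Analysis.Analysis"
begin

definition simple_graph :: "'a set \<Rightarrow> 'a set set \<Rightarrow> bool" where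
  "simple_graph V E \<longleftrightarrow> E \<subseteq> {{u, v} | u v. u \<in> V \<and> v \<in> V \<and> u \<noteq> v}"

definition reach :: "'a set \<Rightarrow> 'a set set \<Rightarrow> 'a \<Rightarrow> 'a \<Rightarrow> bool" where
  "reach V E = (\<lambda>u v. u \<in> V \<and> v \<in> V \<and> {u, v} \<in> E)\<^sup>*\<^sup>*"

definition components :: "'a set \<Rightarrow> 'a set set \<Rightarrow> 'a set set" where
  "components V E = {{w \<in> V. reach V E v w} | v. v \<in> V}"

definition KN_edges :: "nat set set" where
  "KN_edges = {{x, y} | x y. 1 \<le> x \<and> 1 \<le> y \<and> x \<noteq> y}"

text \<open>An r-colouring of the edges of \<open>K_\<nat>\<close> (values on non-edges are irrelevant).\<close>
definition coloring :: "nat \<Rightarrow> (nat set \<Rightarrow> nat) \<Rightarrow> bool" where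
  "coloring r \<phi> \<longleftrightarrow> (\<forall>e \<in> KN_edges. \<phi> e < r)"

definition is_copy :: "'a set \<Rightarrow> 'a set set \<Rightarrow> nat set \<Rightarrow> nat set set \<Rightarrow> bool" where
  "is_copy V E W F \<longleftrightarrow> W \<subseteq> {1..} \<and> F \<subseteq> KN_edges \<and> (\<forall>e \<in> F. e \<subseteq> W) \<and>
     (\<exists>f. bij_betw f V W \<and> (\<forall>u \<in> V. \<forall>v \<in> V. {u, v} \<in> E \<longleftrightarrow> {f u, f v} \<in> F))"

definition monochromatic :: "(nat set \<Rightarrow> nat) \<Rightarrow> nat set set \<Rightarrow> bool" where
  "monochromatic \<phi> F \<longleftrightarrow> (\<exists>c. \<forall>e \<in> F. \<phi> e = c)"

definition upper_density :: "nat set \<Rightarrow> ereal" where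
  "upper_density W = limsup (\<lambda>t. ereal (real (card (W \<inter> {1..t})) / real t))"

definition Rd_col :: "(nat set \<Rightarrow> nat) \<Rightarrow> 'a set \<Rightarrow> 'a set set \<Rightarrow> ereal" where
  "Rd_col \<phi> V E = Sup {upper_density W | W F. is_copy V E W F \<and> monochromatic \<phi> F}"

definition Rd :: "nat \<Rightarrow> 'a set \<Rightarrow> 'a set set \<Rightarrow> ereal" where
  "Rd r V E = Inf {Rd_col \<phi> V E | \<phi>. coloring r \<phi>}"

end

theory Submission
  imports Defs "HOL-Library.Ramsey" "HOL-Library.Nat_Bijection"
begin

lemma ud_mono:
  assumes "S \<subseteq> S'"
  shows "upper_density S \<le> upper_density S'"
  unfolding upper_density_def
proof (rule Limsup_mono, rule always_eventually, rule allI)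
  fix t
  have "card (S \<inter> {1..t}) \<le> card (S' \<inter> {1..t})"
    by (rule card_mono) (use assms in auto)
  then show "ereal (real (card (S \<inter> {1..t})) / real t) \<le> ereal (real (card (S' \<inter> {1..t})) / real t)"
    by (simp add: divide_right_mono)
qed

lemma ud_finite:
  assumes "finite S"
  shows "upper_density S \<le> 0"
proof -
  have lim: "(\<lambda>t. ereal (real (card S) / real t)) \<longlonglongrightarrow> ereal 0"
    by (intro tendsto_intros lim_const_over_n)
  have "upper_density S \<le> limsup (\<lambda>t. ereal (real (card S) / real t))"
    unfolding upper_density_def
  proof (rule Limsup_mono, rule always_eventually, rule allI)
    fix t
    have "card (S \<inter> {1..t}) \<le> card S" by (rule card_mono) (use assms in auto)
    then show "ereal (real (card (S \<inter> {1..t})) / real t) \<le> ereal (real (card S) / real t)"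
      by (simp add: divide_right_mono)
  qed
  also have "\<dots> = 0" using lim_imp_Limsup[OF _ lim] by (simp add: zero_ereal_def)
  finally show ?thesis .
qed

lemma ud_pigeon:
  fixes T :: "nat \<Rightarrow> nat set" and r :: nat
  assumes r: "r \<ge> 1" and fin: "finite ({1..} - (\<Union>c<r. T c))"
  shows "\<exists>c<r. upper_density (T c) \<ge> ereal (1 / real r)"
proof (rule ccontr)
  assume "\<not> ?thesis"
  then have lt: "\<forall>c<r. upper_density (T c) < ereal (1 / real r)" by auto
  have "\<forall>c. \<exists>z. c < r \<longrightarrow> upper_density (T c) < ereal z \<and> z < 1 / real r"
  proof
    fix c
    show "\<exists>z. c < r \<longrightarrow> upper_density (T c) < ereal z \<and> z < 1 / real r"
    proof (cases "c < r")
      case True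
      then obtain z where "upper_density (T c) < ereal z" "ereal z < ereal (1 / real r)"
        using lt ereal_dense2 by blast
      then show ?thesis by auto
    qed auto
  qed
  then obtain z where z: "\<And>c. c < r \<Longrightarrow> upper_density (T c) < ereal (z c) \<and> z c < 1 / real r"
    using choice[of "\<lambda>c z. c < r \<longrightarrow> upper_density (T c) < ereal z \<and> z < 1 / real r"] by blast
  define \<delta> where "\<delta> = Max (z ` {..<r})"
  have "0 \<in> {..<r}" using r by auto
  then have ne': "z ` {..<r} \<noteq> {}" by blast
  have \<delta>lt: "\<delta> < 1 / real r" unfolding \<delta>_def Max_less_iff[OF finite_imageI[OF finite_lessThan] ne'] using z by auto
  have zle: "c < r \<Longrightarrow> z c \<le> \<delta>" for c unfolding \<delta>_def by (rule Max_ge) auto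
  have "\<forall>c\<in>{..<r}. \<forall>\<^sub>F t in sequentially. real (card (T c \<inter> {1..t})) / real t < \<delta>"
  proof
    fix c assume c: "c \<in> {..<r}"
    have "\<forall>\<^sub>F t in sequentially. ereal (real (card (T c \<inter> {1..t})) / real t) < ereal (z c)"
      using Limsup_lessD[OF z[of c, THEN conjunct1, unfolded upper_density_def]] c by auto
    then show "\<forall>\<^sub>F t in sequentially. real (card (T c \<inter> {1..t})) / real t < \<delta>"
      by eventually_elim (use zle[of c] c in auto)
  qed
  then have ev: "\<forall>\<^sub>F t in sequentially. \<forall>c\<in>{..<r}. real (card (T c \<inter> {1..t})) / real t < \<delta>"
    by (intro eventually_ball_finite) auto
  then obtain N where N: "\<And>t. t \<ge> N \<Longrightarrow> \<forall>c\<in>{..<r}. real (card (T c \<inter> {1..t})) / real t < \<delta>"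
    unfolding eventually_sequentially by blast
  define e where "e = card ({1..} - (\<Union>c<r. T c))"
  have pos: "1 - real r * \<delta> > 0" using \<delta>lt r by (simp add: field_simps)
  define t where "t = max N (nat \<lceil>real e / (1 - real r * \<delta>)\<rceil> + 1)"
  have tN: "t \<ge> N" and t1: "t \<ge> 1" unfolding t_def by auto
  have tbig: "real t > real e / (1 - real r * \<delta>)" unfolding t_def by linarith
  have cov: "{1..t} \<subseteq> (\<Union>c<r. T c \<inter> {1..t}) \<union> ({1..} - (\<Union>c<r. T c))" by auto
  have "t = card {1..t}" by simp
  also have "\<dots> \<le> card ((\<Union>c<r. T c \<inter> {1..t}) \<union> ({1..} - (\<Union>c<r. T c)))"
    by (rule card_mono[OF _ cov]) (use fin in auto)
  also have "\<dots> \<le> card (\<Union>c<r. T c \<inter> {1..t}) + e"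
    unfolding e_def by (rule card_Un_le)
  also have "card (\<Union>c<r. T c \<inter> {1..t}) \<le> (\<Sum>c<r. card (T c \<inter> {1..t}))"
    by (rule card_UN_le) auto
  finally have "t \<le> (\<Sum>c<r. card (T c \<inter> {1..t})) + e" by simp
  then have "real t \<le> real ((\<Sum>c<r. card (T c \<inter> {1..t})) + e)" by (simp only: of_nat_le_iff)
  then have "real t \<le> (\<Sum>c<r. real (card (T c \<inter> {1..t}))) + real e" by simp
  also have "(\<Sum>c<r. real (card (T c \<inter> {1..t}))) \<le> (\<Sum>c<r. \<delta> * real t)"
  proof (rule sum_mono)
    fix c assume "c \<in> {..<r}"
    then have "real (card (T c \<inter> {1..t})) / real t < \<delta>" using N[OF tN] by auto
    then show "real (card (T c \<inter> {1..t})) \<le> \<delta> * real t" using t1 by (simp add: divide_less_eq)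
  qed
  finally have "real t \<le> real r * \<delta> * real t + real e" by simp
  then have "real t * (1 - real r * \<delta>) \<le> real e" by (simp add: algebra_simps)
  moreover have "real t * (1 - real r * \<delta>) > real e" using tbig pos by (simp add: divide_less_eq)
  ultimately show False by simp
qed


definition cl :: "(nat set \<Rightarrow> nat) \<Rightarrow> nat \<Rightarrow> nat set \<Rightarrow> bool" where
  "cl \<phi> c K \<longleftrightarrow> K \<subseteq> {1..} \<and> infinite K \<and> (\<forall>a\<in>K. \<forall>b\<in>K. a \<noteq> b \<longrightarrow> \<phi> {a, b} = c)"

definition Tc :: "(nat set \<Rightarrow> nat) \<Rightarrow> nat \<Rightarrow> nat set" where
  "Tc \<phi> c = {x. \<exists>K. x \<in> K \<and> cl \<phi> c K}"

lemma exc_finite: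
  assumes col: "coloring r \<phi>"
  shows "finite ({1..} - (\<Union>c<r. Tc \<phi> c))"
proof (rule ccontr)
  let ?Z = "{1..} - (\<Union>c<r. Tc \<phi> c)"
  assume inf: "infinite ?Z"
  have part: "\<forall>x\<in>?Z. \<forall>y\<in>?Z. x \<noteq> y \<longrightarrow> \<phi> {x, y} < r"
  proof (intro ballI impI)
    fix x y assume "x \<in> ?Z" "y \<in> ?Z" "x \<noteq> y"
    then have "{x, y} \<in> KN_edges" unfolding KN_edges_def by auto
    then show "\<phi> {x, y} < r" using col unfolding coloring_def by auto
  qed
  obtain Y t where Y: "Y \<subseteq> ?Z" "infinite Y" "t < r" "\<forall>x\<in>Y. \<forall>y\<in>Y. x\<noteq>y \<longrightarrow> \<phi> {x, y} = t"
    using Ramsey2[OF inf part] by blast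
  obtain x where x: "x \<in> Y" using Y(2) by (metis finite.emptyI ex_in_conv)
  have "cl \<phi> t Y" unfolding cl_def using Y by auto
  then have "x \<in> Tc \<phi> t" unfolding Tc_def using x by auto
  then show False using x Y(1,3) by auto
qed


definition stp :: "nat set \<Rightarrow> (nat \<Rightarrow> nat set) \<Rightarrow> (nat \<Rightarrow> nat set) \<Rightarrow> nat \<Rightarrow> nat list \<Rightarrow> nat" where
  "stp T K idx s L = (let i = fst (prod_decode s); k = snd (prod_decode s) in
    if k \<notin> idx i then 0
    else if k = 0 then (LEAST x. x \<in> T \<and> x \<notin> set L)
    else (LEAST x. x \<in> K (L ! prod_encode (i,0)) \<and> x \<notin> set L))"

fun Ls :: "nat set \<Rightarrow> (nat \<Rightarrow> nat set) \<Rightarrow> (nat \<Rightarrow> nat set) \<Rightarrow> nat \<Rightarrow> nat list" where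
  "Ls T K idx 0 = []"
| "Ls T K idx (Suc s) = Ls T K idx s @ [stp T K idx s (Ls T K idx s)]"

definition pt :: "nat set \<Rightarrow> (nat \<Rightarrow> nat set) \<Rightarrow> (nat \<Rightarrow> nat set) \<Rightarrow> nat \<Rightarrow> nat" where
  "pt T K idx s = Ls T K idx (Suc s) ! s"

lemma Ls_len: "length (Ls T K idx s) = s"
  by (induction s) auto

lemma Ls_nth: "j < s \<Longrightarrow> Ls T K idx s ! j = pt T K idx j"
proof (induction s)
  case 0 then show ?case by simp
next
  case (Suc s)
  show ?case
  proof (cases "j < s")
    case True then show ?thesis using Suc by (simp add: nth_append Ls_len)
  next
    case False then have "j = s" using Suc by simp
    then show ?thesis unfolding pt_def by simp
  qed
qed

lemma Ls_set: "set (Ls T K idx s) = pt T K idx ` {..<s}"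
proof -
  have "set (Ls T K idx s) = (\<lambda>j. Ls T K idx s ! j) ` {..<s}"
    by (metis Ls_len atLeast_upt list.set_map map_nth set_upt lessThan_atLeast0)
  also have "\<dots> = pt T K idx ` {..<s}" using Ls_nth by (intro image_cong) auto
  finally show ?thesis .
qed

lemma tri_mono: "m \<le> n \<Longrightarrow> triangle m \<le> triangle n"
  by (induction n) (auto simp: le_Suc_eq)

lemma pt_eq: "pt T K idx s = (let i = fst (prod_decode s); k = snd (prod_decode s) in
    if k \<notin> idx i then 0
    else if k = 0 then (LEAST x. x \<in> T \<and> x \<notin> pt T K idx ` {..<s})
    else (LEAST x. x \<in> K (pt T K idx (prod_encode (i,0))) \<and> x \<notin> pt T K idx ` {..<s}))"
proof -
  have "pt T K idx s = stp T K idx s (Ls T K idx s)" unfolding pt_def by (simp add: nth_append Ls_len)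
  moreover have "prod_encode (fst (prod_decode s), 0) < s" if "snd (prod_decode s) \<noteq> 0"
  proof -
    obtain i k where d: "prod_decode s = (i,k)" by (cases "prod_decode s")
    then have s: "s = prod_encode (i,k)" by (metis prod_decode_inverse)
    have "k > 0" using that d by simp
    have "triangle (Suc i) \<le> triangle (i + k)" using \<open>k > 0\<close> by (intro tri_mono) simp
    then have "prod_encode (i,0) < prod_encode (i,k)"
      by (simp add: prod_encode_def)
    then show ?thesis using s d by simp
  qed
  ultimately show ?thesis unfolding stp_def Let_def Ls_set by (auto simp: Ls_nth)
qed

lemma construction:
  fixes T :: "nat set" and K idx :: "nat \<Rightarrow> nat set"
  assumes infT: "infinite T"
    and KT: "\<And>x. x \<in> T \<Longrightarrow> x \<in> K x \<and> infinite (K x)"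
    and idx0: "\<And>i. 0 \<in> idx i"
    and T0: "0 \<notin> T"
  shows "\<exists>g :: nat \<Rightarrow> nat \<Rightarrow> nat.
     inj_on (\<lambda>(i,k). g i k) {(i,k). k \<in> idx i} \<and>
     (\<forall>i. g i 0 \<in> T) \<and>
     (\<forall>i k. k \<in> idx i \<longrightarrow> g i k \<in> K (g i 0)) \<and>
     T \<subseteq> {g i k | i k. k \<in> idx i}"
proof -
  let ?p = "pt T K idx"
  define act where "act s \<longleftrightarrow> snd (prod_decode s) \<in> idx (fst (prod_decode s))" for s
  have root: "?p s \<in> T \<and> ?p s \<notin> ?p ` {..<s} \<and> (\<forall>y. y \<in> T \<and> y \<notin> ?p ` {..<s} \<longrightarrow> ?p s \<le> y)"
    if "snd (prod_decode s) = 0" for s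
  proof -
    have a: "snd (prod_decode s) \<in> idx (fst (prod_decode s))" using that idx0 by simp
    have e: "?p s = (LEAST x. x \<in> T \<and> x \<notin> ?p ` {..<s})"
      using pt_eq[of T K idx s] a that by (simp add: Let_def)
    have "infinite (T - ?p ` {..<s})" using infT by simp
    then obtain y where "y \<in> T - ?p ` {..<s}" by (metis finite.emptyI ex_in_conv)
    then have "y \<in> T \<and> y \<notin> ?p ` {..<s}" by blast
    from LeastI[of "\<lambda>x. x \<in> T \<and> x \<notin> ?p ` {..<s}", OF this]
    have "?p s \<in> T \<and> ?p s \<notin> ?p ` {..<s}" unfolding e .
    moreover have "\<forall>z. z \<in> T \<and> z \<notin> ?p ` {..<s} \<longrightarrow> ?p s \<le> z"
      unfolding e by (blast intro: Least_le)
    ultimately show ?thesis by blast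
  qed
  have nonroot: "?p s \<in> K (?p (prod_encode (fst (prod_decode s), 0))) \<and> ?p s \<notin> ?p ` {..<s}"
    if "act s" "snd (prod_decode s) \<noteq> 0" for s
  proof -
    let ?r = "prod_encode (fst (prod_decode s), 0)"
    have "?p ?r \<in> T" using root[of ?r] by simp
    then have infK: "infinite (K (?p ?r))" using KT by blast
    have e: "?p s = (LEAST x. x \<in> K (?p ?r) \<and> x \<notin> ?p ` {..<s})"
      using pt_eq[of T K idx s] that unfolding act_def by (simp add: Let_def)
    have "infinite (K (?p ?r) - ?p ` {..<s})" using infK by simp
    then obtain y where "y \<in> K (?p ?r) - ?p ` {..<s}" by (metis finite.emptyI ex_in_conv)
    then have "y \<in> K (?p ?r) \<and> y \<notin> ?p ` {..<s}" by blast
    from LeastI[of "\<lambda>x. x \<in> K (?p ?r) \<and> x \<notin> ?p ` {..<s}", OF this]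
    show ?thesis unfolding e .
  qed
  have fresh: "?p s \<notin> ?p ` {..<s}" if "act s" for s
    using root nonroot that by (cases "snd (prod_decode s) = 0") auto
  have injp: "s = s'" if "act s" "act s'" "?p s = ?p s'" for s s'
  proof (rule ccontr)
    assume "s \<noteq> s'"
    then consider "s < s'" | "s' < s" by linarith
    then show False
    proof cases
      case 1 then show False using fresh[OF that(2)] that(3) by (metis imageI lessThan_iff)
    next
      case 2 then show False using fresh[OF that(1)] that(3) by (metis imageI lessThan_iff)
    qed
  qed
  define g where "g i k = ?p (prod_encode (i,k))" for i k
  have actg: "act (prod_encode (i,k)) \<longleftrightarrow> k \<in> idx i" for i k unfolding act_def by simp
  have injg: "inj_on (\<lambda>(i,k). g i k) {(i,k). k \<in> idx i}"
  proof (rule inj_onI, clarsimp)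
    fix i k i' k' assume "k \<in> idx i" "k' \<in> idx i'" "g i k = g i' k'"
    then have "prod_encode (i,k) = prod_encode (i',k')" unfolding g_def using injp actg by blast
    then show "i = i' \<and> k = k'" by (metis prod_encode_eq prod.inject)
  qed
  moreover have "\<forall>i. g i 0 \<in> T" unfolding g_def using root by simp
  moreover have "\<forall>i k. k \<in> idx i \<longrightarrow> g i k \<in> K (g i 0)"
  proof (intro allI impI)
    fix i k assume k: "k \<in> idx i"
    show "g i k \<in> K (g i 0)"
    proof (cases "k = 0")
      case True then show ?thesis using KT root unfolding g_def by simp
    next
      case False then show ?thesis using nonroot[of "prod_encode (i,k)"] actg k unfolding g_def by simp
    qed
  qed
  moreover have "T \<subseteq> {g i k | i k. k \<in> idx i}"
  proof
    fix y assume y: "y \<in> T"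
    show "y \<in> {g i k | i k. k \<in> idx i}"
    proof (rule ccontr)
      assume nin: "y \<notin> {g i k | i k. k \<in> idx i}"
      have notp: "y \<notin> ?p ` {..<s}" for s
      proof
        assume "y \<in> ?p ` {..<s}"
        then obtain j where j: "y = ?p j" by auto
        obtain i k where d: "prod_decode j = (i,k)" by (cases "prod_decode j")
        then have jj: "j = prod_encode (i,k)" by (metis prod_decode_inverse)
        show False
        proof (cases "k \<in> idx i")
          case True then show False using nin j jj unfolding g_def by blast
        next
          case False
          then have "?p j = 0" using pt_eq[of T K idx j] d by (simp add: Let_def)
          then show False using j y T0 by simp
        qed
      qed
      have "g i 0 \<le> y" for i
        using root[of "prod_encode (i,0)"] y notp unfolding g_def by simp
      moreover have "inj (\<lambda>i. g i 0)"
      proof (rule injI)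
        fix i j assume "g i 0 = g j 0"
        then have "(\<lambda>(i,k). g i k) (i,0) = (\<lambda>(i,k). g i k) (j,0)" by simp
        from inj_onD[OF injg this] idx0 show "i = j" by auto
      qed
      ultimately have "range (\<lambda>i. g i 0) \<subseteq> {..y}" by auto
      then have "finite (range (\<lambda>i. g i 0))" using finite_subset by blast
      then show False using \<open>inj (\<lambda>i. g i 0)\<close> by (simp add: finite_image_iff)
    qed
  qed
  ultimately show ?thesis by blast
qed


lemma reach_sym: "reach V E u v \<Longrightarrow> reach V E v u"
proof -
  have "symp (\<lambda>u v. u \<in> V \<and> v \<in> V \<and> {u, v} \<in> E)"
    by (auto intro!: sympI simp: insert_commute)
  then show "reach V E u v \<Longrightarrow> reach V E v u"
    unfolding reach_def by (rule sympD[OF symp_rtranclp])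
qed

lemma reach_trans: "reach V E u v \<Longrightarrow> reach V E v w \<Longrightarrow> reach V E u w"
  unfolding reach_def by (rule rtranclp_trans)

lemma comp_eq:
  assumes "v \<in> {w \<in> V. reach V E a w}"
  shows "{w \<in> V. reach V E v w} = {w \<in> V. reach V E a w}"
proof -
  have av: "reach V E a v" and vV: "v \<in> V" using assms by auto
  have va: "reach V E v a" using reach_sym[OF av] .
  show ?thesis
  proof (intro set_eqI iffI)
    fix w assume "w \<in> {w \<in> V. reach V E v w}"
    then show "w \<in> {w \<in> V. reach V E a w}" using reach_trans[OF av] by auto
  next
    fix w assume "w \<in> {w \<in> V. reach V E a w}"
    then show "w \<in> {w \<in> V. reach V E v w}" using reach_trans[OF va] by auto
  qed
qed

theorem mainTheorem10:
  fixes r :: nat and V :: "'a set" and E :: "'a set set"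
  assumes "r \<ge> 1"
    and "simple_graph V E"
    and "countable V"
    and "infinite (components V E)"
  shows "Rd r V E \<ge> ereal (1 / real r)"
proof -
  note r = assms(1) and sg = assms(2) and cV = assms(3) and infC = assms(4)
  define comp where "comp v = {w \<in> V. reach V E v w}" for v
  have compI: "v \<in> V \<Longrightarrow> v \<in> comp v" for v unfolding comp_def reach_def by simp
  have comp_eq': "v \<in> comp a \<Longrightarrow> comp v = comp a" for v a unfolding comp_def by (rule comp_eq)
  have compV: "comp v \<subseteq> V" for v unfolding comp_def by auto
  have CC: "components V E = comp ` V" unfolding components_def comp_def by auto
  have cC: "countable (components V E)" unfolding CC using cV by simp
  define cn where "cn = from_nat_into (components V E)"
  have bij: "bij_betw cn UNIV (components V E)" unfolding cn_def by (rule bij_betw_from_nat_into[OF cC infC])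
  have cn_comp: "\<exists>v\<in>V. cn i = comp v" for i using bij_betwE[OF bij] unfolding CC by auto
  have cnV: "cn i \<subseteq> V" for i using cn_comp compV by blast
  have cn_self: "u \<in> cn i \<Longrightarrow> cn i = comp u" for u i using cn_comp comp_eq' by metis
  have cn_ne: "\<exists>v. v \<in> cn i" for i using cn_comp compI by blast
  have cn_ex: "v \<in> V \<Longrightarrow> \<exists>i. v \<in> cn i" for v
  proof -
    assume v: "v \<in> V"
    then have "comp v \<in> components V E" unfolding CC by auto
    then have "comp v \<in> range cn" using bij unfolding bij_betw_def by simp
    then obtain i where "cn i = comp v" by (metis rangeE)
    then show ?thesis using compI[OF v] by auto
  qed
  have cn_uniq: "v \<in> cn i \<Longrightarrow> v \<in> cn j \<Longrightarrow> i = j" for v i j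
  proof -
    assume "v \<in> cn i" "v \<in> cn j"
    then have "cn i = cn j" using cn_self by metis
    then show "i = j" using bij unfolding bij_betw_def inj_def by auto
  qed
  define ci where "ci v = (THE i. v \<in> cn i)" for v
  have ci: "v \<in> cn i \<Longrightarrow> ci v = i" for v i unfolding ci_def using cn_uniq by blast
  have ciV: "v \<in> V \<Longrightarrow> v \<in> cn (ci v)" for v using ci cn_ex by metis
  have edge_ci: "{u, v} \<in> E \<Longrightarrow> u \<in> V \<Longrightarrow> v \<in> V \<Longrightarrow> ci u = ci v" for u v
  proof -
    assume uv: "{u, v} \<in> E" "u \<in> V" "v \<in> V"
    then have "reach V E u v" unfolding reach_def by auto
    then have "v \<in> comp u" unfolding comp_def using uv by auto
    moreover have "cn (ci u) = comp u" using cn_self ciV uv by blast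
    ultimately show ?thesis using ci by metis
  qed
  show ?thesis
    unfolding Rd_def
  proof (rule Inf_greatest, clarify)
    fix \<phi> assume col: "coloring r \<phi>"
    obtain c where c: "c < r" "upper_density (Tc \<phi> c) \<ge> ereal (1 / real r)"
      using ud_pigeon[OF r exc_finite[OF col]] by blast
    define T where "T = Tc \<phi> c"
    have T0: "0 \<notin> T" unfolding T_def Tc_def cl_def by auto
    have infT: "infinite T"
    proof
      assume "finite T"
      then have u0: "upper_density T \<le> 0" by (rule ud_finite)
      have "ereal (1 / real r) \<le> 0" using order_trans[OF c(2)[folded T_def] u0] .
      moreover have "ereal (1 / real r) > 0" using r by simp
      ultimately show False by simp
    qed
    define K where "K x = (SOME K. x \<in> K \<and> cl \<phi> c K)" for x
    have KT: "x \<in> K x \<and> cl \<phi> c (K x)" if "x \<in> T" for x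
    proof -
      have "\<exists>K. x \<in> K \<and> cl \<phi> c K" using that unfolding T_def Tc_def by auto
      then show ?thesis unfolding K_def by (rule someI_ex)
    qed
    define \<rho> where "\<rho> i = (SOME v. v \<in> cn i)" for i
    have \<rho>: "\<rho> i \<in> cn i" for i unfolding \<rho>_def using cn_ne by (rule someI_ex)
    define e where "e i v = (if v = \<rho> i then 0 else Suc (to_nat_on (cn i) v))" for i v
    have inje: "inj_on (e i) (cn i)" for i
    proof -
      have "countable (cn i)" using cnV cV countable_subset by blast
      then have "inj_on (to_nat_on (cn i)) (cn i)" by (rule inj_on_to_nat_on)
      then show ?thesis unfolding e_def inj_on_def by auto
    qed
    define idx where "idx i = e i ` cn i" for i
    have idx0: "0 \<in> idx i" for i unfolding idx_def e_def using \<rho> by force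
    obtain g where g1: "inj_on (\<lambda>(i,k). g i k) {(i,k). k \<in> idx i}"
      and g2: "\<forall>i. g i 0 \<in> T" and g3: "\<forall>i k. k \<in> idx i \<longrightarrow> g i k \<in> K (g i 0)"
      and g4: "T \<subseteq> {g i k | i k. k \<in> idx i}"
    proof -
      have "\<And>x. x \<in> T \<Longrightarrow> x \<in> K x \<and> infinite (K x)" using KT unfolding cl_def by blast
      from construction[of T K idx, OF infT this idx0 T0] show ?thesis using that by blast
    qed
    define f where "f v = g (ci v) (e (ci v) v)" for v
    have fK: "v \<in> V \<Longrightarrow> f v \<in> K (g (ci v) 0)" for v
      unfolding f_def using g3 ciV unfolding idx_def by blast
    have f1: "v \<in> V \<Longrightarrow> f v \<ge> 1" for v
      using fK KT g2 unfolding cl_def by fastforce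
    have injf: "inj_on f V"
    proof (rule inj_onI)
      fix u v assume u: "u \<in> V" and v: "v \<in> V" and fe: "f u = f v"
      have "(ci u, e (ci u) u) \<in> {(i,k). k \<in> idx i}" using ciV[OF u] unfolding idx_def by auto
      moreover have "(ci v, e (ci v) v) \<in> {(i,k). k \<in> idx i}" using ciV[OF v] unfolding idx_def by auto
      moreover have "(\<lambda>(i,k). g i k) (ci u, e (ci u) u) = (\<lambda>(i,k). g i k) (ci v, e (ci v) v)"
        using fe unfolding f_def by simp
      ultimately have eq: "ci u = ci v" "e (ci u) u = e (ci v) v" using inj_onD[OF g1] by blast+
      show "u = v" using inj_onD[OF inje eq(2)[folded eq(1)]] ciV[OF u] ciV[OF v] eq(1) by simp
    qed
    define W where "W = f ` V"
    define F where "F = (\<lambda>x. f ` x) ` E"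
    have TW: "T \<subseteq> W"
    proof
      fix t assume "t \<in> T"
      then obtain i k where t: "t = g i k" "k \<in> idx i" using g4 by blast
      then obtain v where v: "v \<in> cn i" "k = e i v" unfolding idx_def by blast
      then have "ci v = i" using ci by blast
      then have "f v = t" using t v unfolding f_def by simp
      then show "t \<in> W" unfolding W_def using v cnV by blast
    qed
    have Eform: "x \<in> E \<Longrightarrow> \<exists>u v. x = {u, v} \<and> u \<in> V \<and> v \<in> V \<and> u \<noteq> v" for x
      using sg unfolding simple_graph_def by blast
    have copy: "is_copy V E W F"
      unfolding is_copy_def
    proof (intro conjI)
      show "W \<subseteq> {1..}" unfolding W_def using f1 by auto
      show "F \<subseteq> KN_edges"
      proof
        fix x assume "x \<in> F"
        then obtain y where y: "y \<in> E" "x = f ` y" unfolding F_def by blast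
        then obtain u v where uv: "y = {u, v}" "u \<in> V" "v \<in> V" "u \<noteq> v" using Eform by blast
        have "f u \<noteq> f v" using injf uv inj_on_def by metis
        moreover have "x = {f u, f v}" using y uv by simp
        ultimately show "x \<in> KN_edges" unfolding KN_edges_def using f1[OF uv(2)] f1[OF uv(3)] by blast
      qed
      show "\<forall>x\<in>F. x \<subseteq> W"
      proof
        fix x assume "x \<in> F"
        then obtain y where y: "y \<in> E" "x = f ` y" unfolding F_def by blast
        then obtain u v where "y = {u,v}" "u \<in> V" "v \<in> V" using Eform by blast
        then show "x \<subseteq> W" unfolding W_def using y by auto
      qed
      show "\<exists>f. bij_betw f V W \<and> (\<forall>u\<in>V. \<forall>v\<in>V. ({u, v} \<in> E) = ({f u, f v} \<in> F))"
      proof (intro exI conjI ballI)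
        show "bij_betw f V W" unfolding W_def using injf by (simp add: bij_betw_def)
        fix u v assume u: "u \<in> V" and v: "v \<in> V"
        show "({u, v} \<in> E) = ({f u, f v} \<in> F)"
        proof
          assume uvE: "{u, v} \<in> E"
          have "f ` {u, v} = {f u, f v}" by simp
          then show "{f u, f v} \<in> F" unfolding F_def using uvE by (metis image_eqI)
        next
          assume "{f u, f v} \<in> F"
          then obtain y where y: "y \<in> E" "f ` y = {f u, f v}" unfolding F_def by (metis imageE)
          then obtain a b where ab: "y = {a, b}" "a \<in> V" "b \<in> V" using Eform by blast
          have "f ` {a, b} = f ` {u, v}" using y ab by simp
          then have "{a, b} = {u, v}" using inj_on_image_eq_iff[OF injf, of "{a,b}" "{u,v}"] ab u v by simp
          then show "{u, v} \<in> E" using y ab by simp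
        qed
      qed
    qed
    have mono: "Defs.monochromatic \<phi> F"
      unfolding Defs.monochromatic_def
    proof (intro exI ballI)
      fix x assume "x \<in> F"
      then obtain y where y: "y \<in> E" "x = f ` y" unfolding F_def by blast
      then obtain u v where uv: "y = {u, v}" "u \<in> V" "v \<in> V" "u \<noteq> v" using Eform by blast
      have fuv: "f u \<noteq> f v" using injf uv inj_on_def by metis
      have "ci u = ci v" using edge_ci y uv by blast
      then have "f u \<in> K (g (ci u) 0)" "f v \<in> K (g (ci u) 0)" using fK[OF uv(2)] fK[OF uv(3)] by simp_all
      moreover have "cl \<phi> c (K (g (ci u) 0))" using KT g2 by blast
      ultimately have "\<phi> {f u, f v} = c" using fuv unfolding cl_def by blast
      then show "\<phi> x = c" using y uv by simp
    qed
    have "ereal (1 / real r) \<le> upper_density T" using c(2) unfolding T_def .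
    also have "\<dots> \<le> upper_density W" by (rule ud_mono[OF TW])
    also have "\<dots> \<le> Rd_col \<phi> V E"
      unfolding Rd_col_def using copy mono by (auto intro!: Sup_upper)
    finally show "ereal (1 / real r) \<le> Rd_col \<phi> V E" .
  qed
qed

end
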